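(* Every self-similar tree $T$ admits a rigid structure. That is, there is a family $\{\varphi_{vw}\}$ consisting of one morphism $\varphi_{vw}\in\mathrm{Mor}(v,w)$ for each ordered pair $(v,w)$ of vertices of $T$ of the same type, satisfying two conditions: (1) $\varphi_{vw}\circ\varphi_{uv}=\varphi_{uw}$ for all triples $u,v,w$ of the same type; (2) whenever $v'$ is a descendant of $v$ and $w'=\varphi_{vw}(v')$, the morphism $\varphi_{v'w'}$ is the restriction of $\varphi_{vw}$ to $T_{v'}$.
   Context: A self-similar tree is a locally finite rooted tree $T$ (identified with its vertex set) with a partition of the vertices into finitely many types, and for each pair $u,v$ of same-type vertices a nonempty finite set $\mathrm{Mor}(u,v)$ of rooted tree isomorphisms $T_u\to T_v$ (morphisms) preserving types, where $T_v$ is the subtree of $v$ and its descendants. The morphisms satisfy: (a) inverses of morphisms are morphisms; (b) compositions $\psi\varphi$ with $\varphi\in\mathrm{Mor}(u,v)$, $\psi\in\mathrm{Mor}(v,w)$ lie in $\mathrm{Mor}(u,w)$; (c) restrictions of a morphism $\varphi\in\mathrm{Mor}(v,w)$ to $T_u$, $u\in T_v$, lie in $\mathrm{Mor}(u,\varphi(u))$. *)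

theory Defs
  imports "HOL-Library.FuncSet"
begin

definition rooted_tree :: "'v set \<Rightarrow> 'v \<Rightarrow> ('v \<Rightarrow> 'v) \<Rightarrow> bool" where
  "rooted_tree V r p \<longleftrightarrow> r \<in> V \<and> p r = r \<and> (\<forall>u\<in>V - {r}. p u \<in> V)
     \<and> (\<forall>u\<in>V. \<exists>n. (p ^^ n) u = r)"

definition locally_finite_tree :: "'v set \<Rightarrow> 'v \<Rightarrow> ('v \<Rightarrow> 'v) \<Rightarrow> bool" where
  "locally_finite_tree V r p \<longleftrightarrow> rooted_tree V r p
     \<and> (\<forall>v\<in>V. finite {u\<in>V. u \<noteq> r \<and> p u = v})"

definition subtree :: "'v set \<Rightarrow> ('v \<Rightarrow> 'v) \<Rightarrow> 'v \<Rightarrow> 'v set" where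
  "subtree V p v = {u\<in>V. \<exists>n. (p ^^ n) u = v}"

definition rooted_iso :: "'v set \<Rightarrow> ('v \<Rightarrow> 'v) \<Rightarrow> 'v \<Rightarrow> 'v \<Rightarrow> ('v \<Rightarrow> 'v) \<Rightarrow> bool" where
  "rooted_iso V p u v f \<longleftrightarrow> f \<in> extensional (subtree V p u)
     \<and> bij_betw f (subtree V p u) (subtree V p v) \<and> f u = v
     \<and> (\<forall>x\<in>subtree V p u - {u}. f (p x) = p (f x))"

definition self_similar_tree ::
  "'v set \<Rightarrow> 'v \<Rightarrow> ('v \<Rightarrow> 'v) \<Rightarrow> ('v \<Rightarrow> 't) \<Rightarrow> ('v \<Rightarrow> 'v \<Rightarrow> ('v \<Rightarrow> 'v) set) \<Rightarrow> bool" where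
  "self_similar_tree V r p tp Mor \<longleftrightarrow>
     locally_finite_tree V r p \<and> finite (tp ` V)
   \<and> (\<forall>u\<in>V. \<forall>v\<in>V. tp u = tp v \<longrightarrow>
        finite (Mor u v) \<and> Mor u v \<noteq> {}
        \<and> (\<forall>f\<in>Mor u v. rooted_iso V p u v f \<and> (\<forall>x\<in>subtree V p u. tp (f x) = tp x)))
   \<and> (\<forall>u\<in>V. \<forall>v\<in>V. tp u = tp v \<longrightarrow> (\<forall>f\<in>Mor u v.
        restrict (inv_into (subtree V p u) f) (subtree V p v) \<in> Mor v u))
   \<and> (\<forall>u\<in>V. \<forall>v\<in>V. \<forall>w\<in>V. tp u = tp v \<and> tp v = tp w \<longrightarrow>
        (\<forall>f\<in>Mor u v. \<forall>g\<in>Mor v w. compose (subtree V p u) g f \<in> Mor u w))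
   \<and> (\<forall>v\<in>V. \<forall>w\<in>V. tp v = tp w \<longrightarrow> (\<forall>f\<in>Mor v w. \<forall>u\<in>subtree V p v.
        restrict f (subtree V p u) \<in> Mor u (f u)))"

end

theory Submission
  imports Defs
begin

locale sst =
  fixes V :: "'v set" and r :: 'v and p :: "'v \<Rightarrow> 'v" and tp :: "'v \<Rightarrow> 't"
    and Mor :: "'v \<Rightarrow> 'v \<Rightarrow> ('v \<Rightarrow> 'v) set"
  assumes ss: "self_similar_tree V r p tp Mor"
begin

abbreviation S where "S u \<equiv> subtree V p u"

lemma tree: "r \<in> V" "p r = r" "\<And>u. u \<in> V \<Longrightarrow> u \<noteq> r \<Longrightarrow> p u \<in> V"
  "\<And>u. u\<in>V \<Longrightarrow> \<exists>n. (p^^n) u = r"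
  using ss unfolding self_similar_tree_def locally_finite_tree_def rooted_tree_def by auto

lemma pV: "u \<in> V \<Longrightarrow> p u \<in> V" using tree by (cases "u = r") auto

lemma mor_basic: assumes "u\<in>V" "v\<in>V" "tp u = tp v" "f \<in> Mor u v"
  shows "rooted_iso V p u v f" "\<And>x. x\<in>S u \<Longrightarrow> tp (f x) = tp x"
  using ss assms unfolding self_similar_tree_def by blast+

lemma mor_ne: "u\<in>V \<Longrightarrow> v\<in>V \<Longrightarrow> tp u = tp v \<Longrightarrow> Mor u v \<noteq> {}"
  using ss unfolding self_similar_tree_def by blast

lemma mor_inv: "u\<in>V \<Longrightarrow> v\<in>V \<Longrightarrow> tp u = tp v \<Longrightarrow> f\<in>Mor u v \<Longrightarrow>
   restrict (inv_into (S u) f) (S v) \<in> Mor v u"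
  using ss unfolding self_similar_tree_def by blast

lemma mor_comp: "u\<in>V \<Longrightarrow> v\<in>V \<Longrightarrow> w\<in>V \<Longrightarrow> tp u = tp v \<Longrightarrow> tp v = tp w \<Longrightarrow>
   f\<in>Mor u v \<Longrightarrow> g\<in>Mor v w \<Longrightarrow> compose (S u) g f \<in> Mor u w"
  using ss unfolding self_similar_tree_def by blast

lemma mor_restr: "v\<in>V \<Longrightarrow> w\<in>V \<Longrightarrow> tp v = tp w \<Longrightarrow> f\<in>Mor v w \<Longrightarrow> u \<in> S v \<Longrightarrow>
   restrict f (S u) \<in> Mor u (f u)"
  using ss unfolding self_similar_tree_def by blast

lemma S_sub: "S u \<subseteq> V" by (auto simp: subtree_def)

lemma self_in: "u\<in>V \<Longrightarrow> u \<in> S u" unfolding subtree_def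
  by (auto intro: exI[of _ 0])

lemma S_trans: "x \<in> S u \<Longrightarrow> S x \<subseteq> S u"
proof
  fix z assume "x \<in> S u" "z \<in> S x"
  then obtain n m where "(p^^n) x = u" "(p^^m) z = x" "z \<in> V" unfolding subtree_def by auto
  then have "(p^^(n+m)) z = u" by (simp add: funpow_add)
  with \<open>z\<in>V\<close> show "z \<in> S u" unfolding subtree_def by auto
qed

lemma funpow_r: "(p^^n) r = r" by (induct n) (auto simp: tree)

lemma r_desc: "r \<in> S u \<Longrightarrow> u = r" using funpow_r unfolding subtree_def by auto

lemma child_in: "v \<in> V \<Longrightarrow> v \<in> S (p v)" unfolding subtree_def
  by (auto intro: exI[of _ 1])

definition dep where "dep v = (LEAST n. (p^^n) v = r)"

lemma dep_r: "dep r = 0" unfolding dep_def by simp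

lemma dep_Suc: assumes "v\<in>V" "v\<noteq>r" shows "dep v = Suc (dep (p v))"
proof -
  obtain n where "(p^^n) v = r" using tree(4) assms by blast
  then have "dep v = Suc (LEAST m. (p^^Suc m) v = r)" unfolding dep_def
    by (rule Least_Suc) (simp add: assms)
  then show ?thesis unfolding dep_def by (simp only: funpow_Suc_right comp_apply)
qed

definition cc where "cc t = (SOME c. c \<in> V \<and> tp c = t)"

lemma cc: "v \<in> V \<Longrightarrow> cc (tp v) \<in> V \<and> tp (cc (tp v)) = tp v"
  unfolding cc_def by (rule someI) auto

definition gg where "gg t y = (SOME f. f \<in> Mor (cc t) y)"

lemma gg: "y\<in>V \<Longrightarrow> gg (tp y) y \<in> Mor (cc (tp y)) y"
proof -
  assume y: "y \<in> V"
  have c: "cc (tp y) \<in> V" "tp (cc (tp y)) = tp y" using cc[OF y] by auto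
  have "Mor (cc (tp y)) y \<noteq> {}" by (rule mor_ne[OF c(1) y c(2)])
  then have "\<exists>f. f \<in> Mor (cc (tp y)) y" by blast
  then show ?thesis unfolding gg_def by (rule someI_ex)
qed

definition f0 where "f0 = (SOME f. f \<in> Mor (cc (tp r)) r)"

definition step where "step v F = (let y = inv_into (S (cc (tp (p v)))) F v in
   compose (S (cc (tp v))) (restrict F (S y)) (gg (tp v) y))"

definition psiN where "psiN = rec_nat (\<lambda>v. f0) (\<lambda>n F v. step v (F (p v)))"

definition psi where "psi v = psiN (dep v) v"

lemma psi_r: "psi r = f0" by (simp add: psi_def dep_r psiN_def)

lemma psi_step: "v\<in>V \<Longrightarrow> v\<noteq>r \<Longrightarrow> psi v = step v (psi (p v))"
  unfolding psi_def by (subst dep_Suc) (simp_all add: psiN_def)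

lemma mor_facts:
  assumes "a\<in>V" "b\<in>V" "tp a = tp b" "F \<in> Mor a b"
  shows "bij_betw F (S a) (S b)" "inj_on F (S a)" "F a = b" "F \<in> extensional (S a)"
   "\<And>x. x\<in>S a \<Longrightarrow> x\<noteq>a \<Longrightarrow> F (p x) = p (F x)" "\<And>x. x\<in>S a \<Longrightarrow> tp (F x) = tp x"
   "\<And>x. x\<in> S a \<Longrightarrow> F x \<in> S b"
  using mor_basic[OF assms] unfolding rooted_iso_def
  by (auto simp: bij_betw_def)

lemma mor_sub:
  assumes "a\<in>V" "b\<in>V" "tp a = tp b" "F \<in> Mor a b" "x \<in> S a"
  shows "bij_betw F (S x) (S (F x))"
proof -
  have xV: "x \<in> V" "F x \<in> V" using assms mor_facts(7)[OF assms(1-4)] S_sub by blast+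
  have R: "restrict F (S x) \<in> Mor x (F x)" using mor_restr assms by blast
  have tx: "tp x = tp (F x)" using mor_facts(6)[OF assms(1-4) assms(5)] by simp
  have B: "bij_betw (restrict F (S x)) (S x) (S (F x))"
    by (rule mor_facts(1)[OF xV(1) xV(2) tx R])
  have E: "bij_betw F (S x) (S (F x)) = bij_betw (restrict F (S x)) (S x) (S (F x))"
    by (rule bij_betw_cong) simp
  show ?thesis by (rule iffD2[OF E B])
qed

lemma psi_mor: "v \<in> V \<Longrightarrow> psi v \<in> Mor (cc (tp v)) v"
proof -
  have "\<forall>v\<in>V. dep v = n \<longrightarrow> psi v \<in> Mor (cc (tp v)) v" for n
  proof (induct n)
    case 0
    show ?case
    proof (intro ballI impI)
      fix v assume "v \<in> V" "dep v = 0"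
      then have "v = r" using dep_Suc by fastforce
      have "f0 \<in> Mor (cc (tp r)) r"
      proof -
        have c: "cc (tp r) \<in> V" "tp (cc (tp r)) = tp r" using cc[OF tree(1)] by auto
        have "Mor (cc (tp r)) r \<noteq> {}" by (rule mor_ne[OF c(1) tree(1) c(2)])
        then have "\<exists>f. f \<in> Mor (cc (tp r)) r" by blast
        then show ?thesis unfolding f0_def by (rule someI_ex)
      qed
      then show "psi v \<in> Mor (cc (tp v)) v" using \<open>v = r\<close> psi_r by simp
    qed
  next
    case (Suc n)
    show ?case
    proof (intro ballI impI)
      fix v assume v: "v \<in> V" "dep v = Suc n"
      then have vr: "v \<noteq> r" using dep_r by auto
      define u where "u = p v"
      have uV: "u \<in> V" using pV v u_def by auto
      have "dep u = n" using dep_Suc[OF v(1) vr] v u_def by simp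
      then have F: "psi u \<in> Mor (cc (tp u)) u" using Suc uV by blast
      define c where "c = cc (tp u)"
      have c: "c \<in> V" "tp c = tp u" using cc[OF uV] c_def by auto
      note mf = mor_facts[OF c(1) uV c(2) F[folded c_def]]
      have vS: "v \<in> S u" using child_in v u_def by simp
      define y where "y = inv_into (S c) (psi u) v"
      have yS: "y \<in> S c" and Fy: "psi u y = v"
        using vS mf(1) unfolding y_def bij_betw_def
        by (auto intro: inv_into_into f_inv_into_f)
      have tpy: "tp y = tp v" using mf(6)[OF yS] Fy by simp
      have yV: "y \<in> V" using yS S_sub by auto
      have R: "restrict (psi u) (S y) \<in> Mor y v"
        using mor_restr[OF c(1) uV c(2) F[folded c_def] yS] Fy by simp
      have G: "gg (tp v) y \<in> Mor (cc (tp v)) y" using gg[OF yV] tpy by simp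
      have ccv: "cc (tp v) \<in> V" "tp (cc (tp v)) = tp v" using cc v by auto
      have "compose (S (cc (tp v))) (restrict (psi u) (S y)) (gg (tp v) y) \<in> Mor (cc (tp v)) v"
        by (rule mor_comp[OF ccv(1) yV v(1) _ _ G R]) (use ccv tpy in auto)
      moreover have "psi v = compose (S (cc (tp v))) (restrict (psi u) (S y)) (gg (tp v) y)"
        using psi_step[OF v(1) vr] unfolding step_def Let_def u_def[symmetric] y_def c_def by simp
      ultimately show "psi v \<in> Mor (cc (tp v)) v" by simp
    qed
  qed
  then show "v \<in> V \<Longrightarrow> ?thesis" by blast
qed


definition psinv where "psinv v = inv_into (S (cc (tp v))) (psi v)"

lemma psinv_facts:
  assumes v: "v \<in> V"
  shows "\<And>w. w \<in> S v \<Longrightarrow> psinv v w \<in> S (cc (tp v)) \<and> psi v (psinv v w) = w"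
    "\<And>a. a \<in> S (cc (tp v)) \<Longrightarrow> psinv v (psi v a) = a"
    "bij_betw (psi v) (S (cc (tp v))) (S v)"
proof -
  have c: "cc (tp v) \<in> V" "tp (cc (tp v)) = tp v" using cc v by auto
  note mf = mor_facts[OF c(1) v c(2) psi_mor[OF v]]
  show "bij_betw (psi v) (S (cc (tp v))) (S v)" by (rule mf(1))
  fix w assume "w \<in> S v"
  then show "psinv v w \<in> S (cc (tp v)) \<and> psi v (psinv v w) = w"
    using mf(1) unfolding psinv_def bij_betw_def
    by (auto intro: inv_into_into f_inv_into_f)
next
  have c: "cc (tp v) \<in> V" "tp (cc (tp v)) = tp v" using cc v by auto
  note mf = mor_facts[OF c(1) v c(2) psi_mor[OF v]]
  fix a assume "a \<in> S (cc (tp v))"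
  then show "psinv v (psi v a) = a" unfolding psinv_def
    using mf(2) by (simp add: inv_into_f_f)
qed

lemma step_local:
  assumes u: "u \<in> V" and x: "x \<in> S (cc (tp u))" "x \<noteq> cc (tp u)" and z: "z \<in> S x"
  shows "psinv (psi u x) (psi u z) =
    inv_into (S (cc (tp x))) (gg (tp x) (psinv (psi u (p x)) (psi u x))) (psinv (psi u (p x)) (psi u z))"
proof -
  define c where "c = cc (tp u)"
  have c: "c \<in> V" "tp c = tp u" using cc u c_def by auto
  define F where "F = psi u"
  have F: "F \<in> Mor c u" using psi_mor[OF u] F_def c_def by simp
  note mf = mor_facts[OF c(1) u c(2) F]
  have xc: "x \<in> S c" using x c_def by simp
  define v where "v = F x"
  define v0 where "v0 = F (p x)"
  have v0p: "v0 = p v" using mf(5)[OF xc] x c_def v_def v0_def by simp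
  have vS: "v \<in> S u" using mf(7)[OF xc] v_def by simp
  have vV: "v \<in> V" using vS S_sub by auto
  have vr: "v \<noteq> r"
  proof
    assume "v = r"
    then have "u = r" using vS r_desc by simp
    then have "F x = F c" using mf(3) \<open>v = r\<close> v_def by simp
    then have "x = c" using mf(2) xc self_in[OF c(1)] inj_on_def by metis
    then show False using x c_def by simp
  qed
  have tpv: "tp v = tp x" using mf(6)[OF xc] v_def by simp
  have v0V: "v0 \<in> V" using pV vV v0p by simp
  define c0 where "c0 = cc (tp v0)"
  have c0: "c0 \<in> V" "tp c0 = tp v0" using cc v0V c0_def by auto
  define G where "G = psi v0"
  have G: "G \<in> Mor c0 v0" using psi_mor[OF v0V] G_def c0_def by simp
  note mg = mor_facts[OF c0(1) v0V c0(2) G]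
  define Y where "Y = psinv v0 v"
  have vSv0: "v \<in> S v0" using child_in[OF vV] v0p by simp
  have Y: "Y \<in> S c0" "G Y = v" using psinv_facts(1)[OF v0V vSv0] Y_def G_def c0_def by auto
  have tpY: "tp Y = tp x" using mg(6)[OF Y(1)] Y tpv by simp
  have YV: "Y \<in> V" using Y S_sub by auto
  define c1 where "c1 = cc (tp x)"
  have c1: "c1 \<in> V" "tp c1 = tp Y" using cc[OF YV] tpY c1_def by auto
  define g where "g = gg (tp x) Y"
  have g: "g \<in> Mor c1 Y" using gg[OF YV] tpY g_def c1_def by simp
  note mgg = mor_facts[OF c1(1) YV c1(2) g]
  have psiv: "psi v = compose (S c1) (restrict G (S Y)) g"
  proof -
    have Yd: "inv_into (S c0) (psi v0) v = Y" by (simp add: Y_def psinv_def c0_def)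
    show ?thesis using psi_step[OF vV vr] unfolding step_def Let_def
      by (simp add: v0p[symmetric] c0_def[symmetric] Yd tpv G_def c1_def g_def)
  qed
  define w where "w = F z"
  have wS: "w \<in> S v" using mor_sub[OF c(1) u c(2) F xc] z w_def v_def
    unfolding bij_betw_def by auto
  have wS0: "w \<in> S v0" using S_trans[OF vSv0] wS by auto
  define A where "A = psinv v0 w"
  have A: "A \<in> S c0" "G A = w" using psinv_facts(1)[OF v0V wS0] A_def G_def c0_def by auto
  have "w \<in> G ` S Y" using mor_sub[OF c0(1) v0V c0(2) G Y(1)] Y(2) wS unfolding bij_betw_def by auto
  then obtain a' where a': "a' \<in> S Y" "G a' = w" by auto
  have "a' \<in> S c0" using S_trans[OF Y(1)] a' by auto
  then have AY: "A \<in> S Y" using mg(2) A a' inj_on_def by metis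
  define b where "b = inv_into (S c1) g A"
  have b: "b \<in> S c1" "g b = A" using mgg(1) AY unfolding b_def bij_betw_def
    by (auto intro: inv_into_into f_inv_into_f)
  have "psi v b = w" using psiv b A AY by (simp add: compose_def)
  then have "psinv v w = b" using psinv_facts(2)[OF vV] b tpv c1_def by metis
  then show ?thesis
    using A_def b_def g_def Y_def v_def w_def F_def v0_def c1_def by simp
qed

lemma key:
  assumes u1: "u1\<in>V" and u2: "u2\<in>V" and tpu: "tp u1 = tp u2"
    and x: "x \<in> S (cc (tp u1))" and z: "z \<in> S x"
  shows "psinv (psi u1 x) (psi u1 z) = psinv (psi u2 x) (psi u2 z)"
proof -
  define c where "c = cc (tp u1)"
  have c: "c \<in> V" "tp c = tp u1" using cc u1 c_def by auto
  have F1: "psi u1 \<in> Mor c u1" using psi_mor[OF u1] c_def by simp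
  have F2: "psi u2 \<in> Mor c u2" using psi_mor[OF u2] c_def tpu by simp
  have base: "psinv (psi u1 c) (psi u1 z) = psinv (psi u2 c) (psi u2 z)" if "z \<in> S c" for z
  proof -
    have tc2: "tp c = tp u2" using c tpu by simp
    have "psi u1 c = u1" "psi u2 c = u2"
      using mor_facts(3)[OF c(1) u1 c(2) F1] mor_facts(3)[OF c(1) u2 tc2 F2] by auto
    moreover have "psinv u1 (psi u1 z) = z" using psinv_facts(2)[OF u1] that c_def by simp
    moreover have "psinv u2 (psi u2 z) = z" using psinv_facts(2)[OF u2] that c_def tpu by simp
    ultimately show ?thesis by simp
  qed
  have H: "\<forall>x z. x\<in>V \<longrightarrow> (p^^n) x = c \<longrightarrow> z \<in> S x \<longrightarrow>
     psinv (psi u1 x) (psi u1 z) = psinv (psi u2 x) (psi u2 z)" for n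
  proof (induct n)
    case 0
    then show ?case using base by simp
  next
    case (Suc n)
    show ?case
    proof (intro allI impI)
      fix x z assume xV: "x \<in> V" and xn: "(p^^Suc n) x = c" and z: "z \<in> S x"
      show "psinv (psi u1 x) (psi u1 z) = psinv (psi u2 x) (psi u2 z)"
      proof (cases "x = c")
        case True then show ?thesis using base z by simp
      next
        case False
        have xc: "x \<in> S c" using xV xn unfolding subtree_def by blast
        have x0: "p x \<in> V" "(p^^n) (p x) = c" using pV xV xn
          by (simp_all only: funpow_Suc_right comp_apply)
        have xx0: "x \<in> S (p x)" using child_in xV by simp
        have zx0: "z \<in> S (p x)" using S_trans[OF xx0] z by auto
        have IH1: "psinv (psi u1 (p x)) (psi u1 x) = psinv (psi u2 (p x)) (psi u2 x)"
          using Suc x0 xx0 by (elim allE impE) auto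
        have IH2: "psinv (psi u1 (p x)) (psi u1 z) = psinv (psi u2 (p x)) (psi u2 z)"
          using Suc x0 zx0 by (elim allE impE) auto
        have xc1: "x \<in> S (cc (tp u1))" "x \<noteq> cc (tp u1)" using xc False c_def by auto
        have xc2: "x \<in> S (cc (tp u2))" "x \<noteq> cc (tp u2)" using xc1 tpu by auto
        show ?thesis
          unfolding step_local[OF u1 xc1 z] step_local[OF u2 xc2 z] IH1 IH2 ..
      qed
    qed
  qed
  obtain n where n: "(p^^n) x = c" "x \<in> V" using x c_def unfolding subtree_def by auto
  show ?thesis using H[of n, rule_format, OF n(2) n(1) z] .
qed

definition phi where "phi v w = compose (S v) (psi w) (restrict (psinv v) (S v))"

lemma phi_mor: assumes "v \<in> V" "w \<in> V" "tp v = tp w" shows "phi v w \<in> Mor v w"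
proof -
  have c: "cc (tp v) \<in> V" "tp (cc (tp v)) = tp v" using cc assms by auto
  have I: "restrict (psinv v) (S v) \<in> Mor v (cc (tp v))"
    using mor_inv[OF c(1) assms(1) c(2) psi_mor[OF assms(1)]] unfolding psinv_def .
  have W: "psi w \<in> Mor (cc (tp v)) w" using psi_mor[OF assms(2)] assms by simp
  show ?thesis unfolding phi_def
    by (rule mor_comp[OF assms(1) c(1) assms(2) _ _ I W]) (use c assms in auto)
qed

lemma phi_app: "z \<in> S v \<Longrightarrow> phi v w z = psi w (psinv v z)"
  unfolding phi_def by (simp add: compose_def)

lemma phi_out: "z \<notin> S v \<Longrightarrow> phi v w z = undefined"
  unfolding phi_def by (simp add: compose_def)

lemma cond1: assumes "u\<in>V" "v\<in>V" "w\<in>V" "tp u = tp v" "tp v = tp w"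
  shows "compose (S u) (phi v w) (phi u v) = phi u w"
proof
  fix z show "compose (S u) (phi v w) (phi u v) z = phi u w z"
  proof (cases "z \<in> S u")
    case True
    define a where "a = psinv u z"
    have a: "a \<in> S (cc (tp v))" using psinv_facts(1)[OF assms(1) True] a_def assms by simp
    have "psi v a \<in> S v" using psinv_facts(3)[OF assms(2)] a unfolding bij_betw_def by auto
    then have "phi v w (psi v a) = psi w a"
      using phi_app psinv_facts(2)[OF assms(2) a] by simp
    then show ?thesis using True phi_app a_def by (simp add: compose_def)
  next
    case False then show ?thesis using phi_out by (simp add: compose_def)
  qed
qed

lemma cond2: assumes v: "v\<in>V" and w: "w\<in>V" and tvw: "tp v = tp w" and v': "v' \<in> S v"
  shows "phi v' (phi v w v') = restrict (phi v w) (S v')"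
proof
  fix z
  define c where "c = cc (tp v)"
  have c: "c \<in> V" "tp c = tp v" using cc v c_def by auto
  have Fv: "psi v \<in> Mor c v" using psi_mor[OF v] c_def by simp
  have Fw: "psi w \<in> Mor c w" using psi_mor[OF w] c_def tvw by simp
  define x where "x = psinv v v'"
  have x: "x \<in> S c" "psi v x = v'" using psinv_facts(1)[OF v v'] x_def c_def by auto
  define w' where "w' = psi w x"
  have w'eq: "phi v w v' = w'" using phi_app[OF v'] x_def w'_def by simp
  have bv: "bij_betw (psi v) (S x) (S v')" using mor_sub[OF c(1) v c(2) Fv x(1)] x by simp
  have bw: "bij_betw (psi w) (S x) (S w')" using mor_sub[OF c(1) w _ Fw x(1)] c tvw w'_def by simp
  have v'V: "v' \<in> V" using v' S_sub by auto
  have w'S: "w' \<in> S w" using mor_facts(7)[OF c(1) w _ Fw x(1)] c tvw w'_def by simp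
  have w'V: "w' \<in> V" using w'S S_sub by auto
  show "phi v' (phi v w v') z = restrict (phi v w) (S v') z"
  proof (cases "z \<in> S v'")
    case True
    have zv: "z \<in> S v" using S_trans[OF v'] True by auto
    define z0 where "z0 = psinv v z"
    have z0: "z0 \<in> S c" "psi v z0 = z" using psinv_facts(1)[OF v zv] z0_def c_def by auto
    have "z \<in> psi v ` S x" using bv True unfolding bij_betw_def by simp
    then obtain z1 where z1: "z1 \<in> S x" "psi v z1 = z" by blast
    have "z1 \<in> S c" using S_trans[OF x(1)] z1 by auto
    then have z0x: "z0 \<in> S x"
      using mor_facts(2)[OF c(1) v c(2) Fv] z0 z1 inj_on_def by metis
    have K: "psinv v' z = psinv w' (psi w z0)"
      using key[OF v w tvw, of x z0] x z0 z0x c_def w'_def by simp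
    have "psi w z0 \<in> S w'" using bw z0x unfolding bij_betw_def by auto
    then have "psi w' (psinv w' (psi w z0)) = psi w z0" using psinv_facts(1)[OF w'V] by blast
    then have "phi v' w' z = psi w z0" using phi_app[OF True] K by simp
    moreover have "phi v w z = psi w z0" using phi_app[OF zv] z0_def by simp
    ultimately show ?thesis using True w'eq by simp
  next
    case False then show ?thesis using phi_out by simp
  qed
qed

end

theorem mainTheorem11:
  fixes V :: "'v set" and r :: 'v and p :: "'v \<Rightarrow> 'v" and tp :: "'v \<Rightarrow> 't"
    and Mor :: "'v \<Rightarrow> 'v \<Rightarrow> ('v \<Rightarrow> 'v) set"
  assumes "self_similar_tree V r p tp Mor"
  shows "\<exists>\<phi> :: 'v \<Rightarrow> 'v \<Rightarrow> ('v \<Rightarrow> 'v).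
     (\<forall>v\<in>V. \<forall>w\<in>V. tp v = tp w \<longrightarrow> \<phi> v w \<in> Mor v w)
   \<and> (\<forall>u\<in>V. \<forall>v\<in>V. \<forall>w\<in>V. tp u = tp v \<and> tp v = tp w \<longrightarrow>
        compose (subtree V p u) (\<phi> v w) (\<phi> u v) = \<phi> u w)
   \<and> (\<forall>v\<in>V. \<forall>w\<in>V. tp v = tp w \<longrightarrow> (\<forall>v'\<in>subtree V p v.
        \<phi> v' (\<phi> v w v') = restrict (\<phi> v w) (subtree V p v')))"
proof -
  interpret sst V r p tp Mor by unfold_locales (rule assms)
  show ?thesis
    by (rule exI[of _ phi]) (use phi_mor cond1 cond2 in blast)
qed

end
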